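(* Let $M_-,M_+\in\mathbb{Z}$ with $M:=M_-+M_+\ge0$, and let $V_{M_-,M_+}\in\mathbb{R}^{(M+1)\times(M+1)}$ be the Vandermonde matrix with entries $(V_{M_-,M_+})_{ij}=(i-1-M_-)^{j-1}$, $1\le i,j\le M+1$ (with $0^0=1$). Then $V_{M_-,M_+}$ is invertible and: (i) for all $i,j\in\{1,\dots,M+1\}$, $$(V_{M_-,M_+}^{-1})_{ij}=\sum_{n=0}^{M+1-i}(M_-)^n\binom{n+i-1}{n}(V_{0,M}^{-1})_{i+n,j};$$ (ii) for all $i,j\in\{1,\dots,M+1\}$, $$(V_{0,M}^{-1})_{ij}=(-1)^{i+j}\sum_{k=1}^{M+1}\frac{1}{(k-1)!}\binom{k-1}{j-1}\left[{k-1\atop i-1}\right];$$ (iii) defining $\nu_{M_-,M_+,m,k}:=\sum_{\ell=-M_-}^{M_+}(V_{M_-,M_+}^{-1})_{m+1,\ell+M_-+1}\,\ell^k$, one has $\nu_{M_-,M_+,m,k}=\delta_{mk}$ for $0\le k\le M$, $0\le m\le M$; (iv) $\sum_{m=0}^{M}\nu_{M_-,M_+,m,k}\,\ell^m=\ell^k$ for all $k\in\mathbb{N}_0$ and all $\ell\in\{-M_-,\dots,M_+\}$.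
   Context: $\left[{n\atop k}\right]$ denotes the unsigned Stirling numbers of the first kind (number of permutations of $n$ elements with exactly $k$ cycles), satisfying $\left[{n\atop 0}\right]=\delta_{n0}$ and $\left[{n+1\atop k}\right]=n\left[{n\atop k}\right]+\left[{n\atop k-1}\right]$. $V_{0,M}$ is the matrix above with $M_-=0$, $M_+=M$, i.e. entries $(i-1)^{j-1}$. *)

theory Defs
  imports "Jordan_Normal_Form.Matrix" "HOL-Combinatorics.Stirling"
begin

text \<open>Vandermonde matrix V_{M-,M+} of size (M+1)x(M+1), M = M- + M+, 0-indexed:
  entry (i,j) = (i - M-)^j, i.e. the paper's (i-1-M-)^(j-1) with 1-based indices.
  Note 0^0 = 1 in Isabelle.\<close>
definition vdm :: "int \<Rightarrow> int \<Rightarrow> real mat" where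
  "vdm Mm Mp = mat (nat (Mm + Mp) + 1) (nat (Mm + Mp) + 1)
     (\<lambda>(i, j). (real i - of_int Mm) ^ j)"

definition minv :: "real mat \<Rightarrow> real mat" where
  "minv A = (SOME B. B \<in> carrier_mat (dim_row A) (dim_row A) \<and> inverts_mat A B \<and> inverts_mat B A)"

definition nu :: "int \<Rightarrow> int \<Rightarrow> nat \<Rightarrow> nat \<Rightarrow> real" where
  "nu Mm Mp m k = (\<Sum>l = -Mm..Mp. minv (vdm Mm Mp) $$ (m, nat (l + Mm)) * of_int l ^ k)"

end

theory Submission
  imports Defs "Jordan_Normal_Form.Determinant"
begin


lemma alt_sum:
  fixes r c :: nat
  shows "(\<Sum>k=0..r. (-1::real)^(c+k) * of_nat (k choose c) * of_nat (r choose k)) = (if r = c then 1 else 0)"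
proof (cases "c \<le> r")
  case False
  then show ?thesis by (intro trans[OF sum.neutral]) auto
next
  case True
  have "(\<Sum>k=0..r. (-1::real)^(c+k) * of_nat (k choose c) * of_nat (r choose k))
      = (\<Sum>k=c..r. (-1::real)^(c+k) * of_nat (k choose c) * of_nat (r choose k))"
    by (rule sum.mono_neutral_right) auto
  also have "\<dots> = (\<Sum>j=0..r-c. (-1::real)^(c+(c+j)) * of_nat ((c+j) choose c) * of_nat (r choose (c+j)))"
    using True by (intro sum.reindex_bij_witness[of _ "\<lambda>j. c + j" "\<lambda>k. k - c"]) auto
  also have "\<dots> = (\<Sum>j=0..r-c. of_nat (r choose c) * ((-1::real)^j * of_nat ((r-c) choose j)))"
  proof (rule sum.cong[OF refl])
    fix j assume j: "j \<in> {0..r-c}"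
    have "(r choose (c+j)) * ((c+j) choose c) = (r choose c) * ((r - c) choose (c + j - c))"
      using j True by (intro choose_mult) auto
    hence e: "real (r choose (c+j)) * real ((c+j) choose c) = real (r choose c) * real ((r-c) choose j)"
      by (metis add_diff_cancel_left' of_nat_mult)
    have "(-1::real)^(c+(c+j)) = (-1)^j"
      by (simp add: power_add flip: power_mult_distrib)
    then show "(-1::real)^(c+(c+j)) * of_nat ((c+j) choose c) * of_nat (r choose (c+j))
       = of_nat (r choose c) * ((-1::real)^j * of_nat ((r-c) choose j))"
      using e by (simp add: algebra_simps)
  qed
  also have "\<dots> = of_nat (r choose c) * (\<Sum>j\<le>r-c. (-1::real)^j * of_nat ((r-c) choose j))"
    by (simp add: sum_distrib_left atLeast0AtMost)
  also have "\<dots> = (if r = c then 1 else 0)"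
  proof (cases "r = c")
    case True then show ?thesis by simp
  next
    case False
    with \<open>c \<le> r\<close> have "r - c > 0" by simp
    then show ?thesis using False by (simp add: choose_alternating_sum)
  qed
  finally show ?thesis .
qed

lemma poch_choose:
  fixes r k :: nat
  shows "pochhammer (- real r) k / fact k = (-1)^k * real (r choose k)"
proof -
  have "real (r choose k) = (-1)^k * pochhammer (- real r) k / fact k"
    by (simp add: binomial_gbinomial gbinomial_pochhammer)
  hence "(-1)^k * real (r choose k) = ((-1)^k * (-1)^k) * pochhammer (- real r) k / fact k"
    by simp
  also have "(-1::real)^k * (-1)^k = 1" by (simp flip: power_add)
  finally show ?thesis by simp
qed


lemma poly_eval:
  fixes r c M :: nat
  assumes "r \<le> M" "c \<le> M"
  shows "(\<Sum>i<Suc M. real r ^ i * ((-1)^(i+c) * (\<Sum>k=0..M. (1 / fact k) * of_nat (k choose c) * of_nat (stirling k i))))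
     = (if r = c then 1 else 0)"
proof -
  have "(\<Sum>i<Suc M. real r ^ i * ((-1)^(i+c) * (\<Sum>k=0..M. (1 / fact k) * of_nat (k choose c) * of_nat (stirling k i))))
    = (\<Sum>i<Suc M. \<Sum>k=0..M. (-1)^c * (1 / fact k) * of_nat (k choose c) * (of_nat (stirling k i) * (- real r) ^ i))"
  proof (intro sum.cong refl)
    fix i
    have e: "real r ^ i * (-1)^(i+c) = (-1)^c * (- real r) ^ i"
    proof -
      have "(- real r)^i = (-1)^i * real r^i" by (rule power_minus)
      then show ?thesis by (simp only: power_add mult_ac)
    qed
    have "real r ^ i * ((-1)^(i+c) * (\<Sum>k=0..M. (1 / fact k) * of_nat (k choose c) * of_nat (stirling k i)))
      = (real r ^ i * (-1)^(i+c)) * (\<Sum>k=0..M. (1 / fact k) * of_nat (k choose c) * of_nat (stirling k i))"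
      by (simp only: mult.assoc)
    also have "\<dots> = (\<Sum>k=0..M. ((-1)^c * (- real r) ^ i) * ((1 / fact k) * of_nat (k choose c) * of_nat (stirling k i)))"
      by (simp only: e sum_distrib_left)
    also have "\<dots> = (\<Sum>k=0..M. (-1)^c * (1 / fact k) * of_nat (k choose c) * (of_nat (stirling k i) * (- real r) ^ i))"
      by (intro sum.cong refl) (simp only: mult_ac)
    finally show "real r ^ i * ((-1)^(i+c) * (\<Sum>k=0..M. (1 / fact k) * of_nat (k choose c) * of_nat (stirling k i)))
      = (\<Sum>k=0..M. (-1)^c * (1 / fact k) * of_nat (k choose c) * (of_nat (stirling k i) * (- real r) ^ i))" .
  qed
  also have "\<dots> = (\<Sum>k=0..M. (-1)^c * (1 / fact k) * of_nat (k choose c) * (\<Sum>i<Suc M. of_nat (stirling k i) * (- real r) ^ i))"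
    by (subst sum.swap) (simp only: sum_distrib_left)
  also have "\<dots> = (\<Sum>k=0..M. (-1)^c * (1 / fact k) * of_nat (k choose c) * pochhammer (- real r) k)"
  proof (intro sum.cong refl)
    fix k assume k: "k \<in> {0..M}"
    have "(\<Sum>i<Suc M. of_nat (stirling k i) * (- real r) ^ i) = (\<Sum>i\<le>k. of_nat (stirling k i) * (- real r) ^ i)"
      using k by (intro sum.mono_neutral_right) auto
    also have "\<dots> = pochhammer (- real r) k" by (rule stirling_pochhammer)
    finally show "(-1)^c * (1 / fact k) * of_nat (k choose c) * (\<Sum>i<Suc M. of_nat (stirling k i) * (- real r) ^ i)
       = (-1)^c * (1 / fact k) * of_nat (k choose c) * pochhammer (- real r) k" by simp
  qed
  also have "\<dots> = (\<Sum>k=0..M. (-1::real)^(c+k) * of_nat (k choose c) * of_nat (r choose k))"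
  proof (intro sum.cong refl)
    fix k
    have "(-1)^c * (1 / fact k) * of_nat (k choose c) * pochhammer (- real r) k
       = (-1)^c * of_nat (k choose c) * (pochhammer (- real r) k / fact k)" by simp
    also have "\<dots> = (-1::real)^(c+k) * of_nat (k choose c) * of_nat (r choose k)"
      by (simp add: poch_choose power_add)
    finally show "(-1)^c * (1 / fact k) * of_nat (k choose c) * pochhammer (- real r) k = \<dots>" .
  qed
  also have "\<dots> = (\<Sum>k=0..r. (-1::real)^(c+k) * of_nat (k choose c) * of_nat (r choose k))"
    using assms by (intro sum.mono_neutral_right) auto
  also have "\<dots> = (if r = c then 1 else 0)" by (rule alt_sum)
  finally show ?thesis .
qed





lemma mult_entry:
  assumes "A \<in> carrier_mat n k" "B \<in> carrier_mat k m" "i < n" "j < m"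
  shows "(A * B) $$ (i,j) = (\<Sum>t<k. A $$ (i,t) * B $$ (t,j))"
  using assms by (auto simp: index_mult_mat scalar_prod_def atLeast0LessThan intro!: sum.cong)

definition Vm :: "int \<Rightarrow> nat \<Rightarrow> real mat" where
  "Vm a M = mat (Suc M) (Suc M) (\<lambda>(i,j). (real i - of_int a) ^ j)"

definition W0 :: "nat \<Rightarrow> real mat" where
  "W0 M = mat (Suc M) (Suc M) (\<lambda>(i,j). (-1)^(i+j) * (\<Sum>k=0..M. (1 / fact k) * of_nat (k choose j) * of_nat (stirling k i)))"

definition Sm :: "int \<Rightarrow> nat \<Rightarrow> real mat" where
  "Sm a M = mat (Suc M) (Suc M) (\<lambda>(i,p). of_int a ^ (p - i) * of_nat (p choose i))"

lemma Vm_car[simp]: "Vm a M \<in> carrier_mat (Suc M) (Suc M)" by (simp add: Vm_def)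
lemma W0_car[simp]: "W0 M \<in> carrier_mat (Suc M) (Suc M)" by (simp add: W0_def)
lemma Sm_car[simp]: "Sm a M \<in> carrier_mat (Suc M) (Suc M)" by (simp add: Sm_def)

lemma vdm_Vm: "Mm + Mp \<ge> 0 \<Longrightarrow> vdm Mm Mp = Vm Mm (nat (Mm + Mp))"
  by (simp add: vdm_def Vm_def)

lemma V0_W0: "Vm 0 M * W0 M = 1\<^sub>m (Suc M)"
proof (rule eq_matI)
  fix r c assume r: "r < dim_row (1\<^sub>m (Suc M) :: real mat)" and c: "c < dim_col (1\<^sub>m (Suc M) :: real mat)"
  hence r': "r \<le> M" and c': "c \<le> M" by auto
  have "(Vm 0 M * W0 M) $$ (r,c) = (\<Sum>i<Suc M. Vm 0 M $$ (r,i) * W0 M $$ (i,c))"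
    using r c by (intro mult_entry[of _ "Suc M" "Suc M" _ "Suc M"]) auto
  also have "\<dots> = (\<Sum>i<Suc M. real r ^ i * ((-1)^(i+c) * (\<Sum>k=0..M. (1 / fact k) * of_nat (k choose c) * of_nat (stirling k i))))"
    using r c by (intro sum.cong refl) (auto simp: Vm_def W0_def)
  also have "\<dots> = (if r = c then 1 else 0)" using r' c' by (rule poly_eval)
  finally show "(Vm 0 M * W0 M) $$ (r,c) = 1\<^sub>m (Suc M) $$ (r,c)" using r c by simp
qed (auto simp: Vm_def W0_def)

lemma V_S: "Vm a M * Sm a M = Vm 0 M"
proof (rule eq_matI)
  fix r p assume r: "r < dim_row (Vm 0 M)" and p: "p < dim_col (Vm 0 M)"
  hence r': "r \<le> M" and p': "p \<le> M" by (auto simp: Vm_def)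
  have "(Vm a M * Sm a M) $$ (r,p) = (\<Sum>i<Suc M. Vm a M $$ (r,i) * Sm a M $$ (i,p))"
    using r p by (intro mult_entry[of _ "Suc M" "Suc M" _ "Suc M"]) (auto simp: Vm_def)
  also have "\<dots> = (\<Sum>i<Suc M. of_nat (p choose i) * (real r - of_int a) ^ i * of_int a ^ (p - i))"
    using r p by (intro sum.cong refl) (auto simp: Vm_def Sm_def)
  also have "\<dots> = (\<Sum>i\<le>p. of_nat (p choose i) * (real r - of_int a) ^ i * of_int a ^ (p - i))"
    using p' by (intro sum.mono_neutral_right) auto
  also have "\<dots> = ((real r - of_int a) + of_int a) ^ p" by (rule binomial_ring[symmetric])
  also have "\<dots> = Vm 0 M $$ (r,p)" using r p by (simp add: Vm_def)
  finally show "(Vm a M * Sm a M) $$ (r,p) = Vm 0 M $$ (r,p)" .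
qed (auto simp: Vm_def Sm_def)

lemma V_inv: "Vm a M * (Sm a M * W0 M) = 1\<^sub>m (Suc M)"
proof -
  have "Vm a M * (Sm a M * W0 M) = (Vm a M * Sm a M) * W0 M"
    by (rule assoc_mult_mat[symmetric, of _ "Suc M" "Suc M" _ "Suc M" _ "Suc M"]) auto
  also have "\<dots> = 1\<^sub>m (Suc M)" by (simp add: V_S V0_W0)
  finally show ?thesis .
qed

lemma inv_V: "(Sm a M * W0 M) * Vm a M = 1\<^sub>m (Suc M)"
  by (rule mat_mult_left_right_inverse[OF Vm_car mult_carrier_mat[OF Sm_car W0_car] V_inv])

lemma W0_V0: "W0 M * Vm 0 M = 1\<^sub>m (Suc M)"
  by (rule mat_mult_left_right_inverse[OF _ _ V0_W0]) auto

lemma minv_eq: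
  assumes A: "A \<in> carrier_mat n n" and B: "B \<in> carrier_mat n n"
    and AB: "A * B = 1\<^sub>m n" and BA: "B * A = 1\<^sub>m n"
  shows "minv A = B"
proof -
  have ex: "\<exists>B. B \<in> carrier_mat (dim_row A) (dim_row A) \<and> inverts_mat A B \<and> inverts_mat B A"
    using A B AB BA by (intro exI[of _ B]) (auto simp: inverts_mat_def)
  define B' where "B' = minv A"
  have P: "B' \<in> carrier_mat (dim_row A) (dim_row A) \<and> inverts_mat A B' \<and> inverts_mat B' A"
    unfolding B'_def minv_def by (rule someI_ex[OF ex])
  hence B': "B' \<in> carrier_mat n n" and B'A: "B' * A = 1\<^sub>m n"
    using A by (auto simp: inverts_mat_def)
  have "B' = B' * (A * B)" using B' AB by simp
  also have "\<dots> = (B' * A) * B" using A B B' by (simp add: assoc_mult_mat)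
  also have "\<dots> = B" using B'A B by simp
  finally show ?thesis by (simp add: B'_def)
qed

lemma int_reindex:
  fixes g :: "int \<Rightarrow> real"
  assumes "a + b \<ge> 0"
  shows "(\<Sum>l = -a..b. g l) = (\<Sum>t<Suc (nat (a+b)). g (int t - a))"
  using assms by (intro sum.reindex_bij_witness[of _ "\<lambda>t. int t - a" "\<lambda>l. nat (l + a)"]) auto



theorem lemma7:
  fixes Mm Mp :: int
  assumes "Mm + Mp \<ge> 0"
  defines "M \<equiv> nat (Mm + Mp)"
  shows "invertible_mat (vdm Mm Mp)
    \<and> (\<forall>i \<le> M. \<forall>j \<le> M. minv (vdm Mm Mp) $$ (i, j)
          = (\<Sum>n = 0..M - i. (of_int Mm) ^ n * of_nat ((n + i) choose n)
                               * minv (vdm 0 (Mm + Mp)) $$ (i + n, j)))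
    \<and> (\<forall>i \<le> M. \<forall>j \<le> M. minv (vdm 0 (Mm + Mp)) $$ (i, j)
          = (-1) ^ (i + j) * (\<Sum>k = 0..M. (1 / fact k) * of_nat (k choose j) * of_nat (stirling k i)))
    \<and> (\<forall>m \<le> M. \<forall>k \<le> M. nu Mm Mp m k = (if m = k then 1 else 0))
    \<and> (\<forall>k :: nat. \<forall>l \<in> {-Mm..Mp}. (\<Sum>m = 0..M. nu Mm Mp m k * of_int l ^ m) = of_int l ^ k)"
proof -
  define a where "a = Mm"
  define Wi where "Wi = Sm a M * W0 M"
  have Wi_car: "Wi \<in> carrier_mat (Suc M) (Suc M)" unfolding Wi_def
    by (rule mult_carrier_mat[OF Sm_car W0_car])
  have V: "vdm Mm Mp = Vm a M" using assms by (simp add: vdm_Vm a_def M_def)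
  have V0: "vdm 0 (Mm + Mp) = Vm 0 M" using assms vdm_Vm[of 0 "Mm + Mp"] by (simp add: M_def)
  have VW: "Vm a M * Wi = 1\<^sub>m (Suc M)" and WV: "Wi * Vm a M = 1\<^sub>m (Suc M)"
    unfolding Wi_def by (rule V_inv, rule inv_V)
  have minvV: "minv (vdm Mm Mp) = Wi" unfolding V by (rule minv_eq[OF Vm_car Wi_car VW WV])
  have minvV0: "minv (vdm 0 (Mm + Mp)) = W0 M" unfolding V0
    by (rule minv_eq[OF Vm_car W0_car V0_W0 W0_V0])
  have P0: "invertible_mat (vdm Mm Mp)"
    unfolding V invertible_mat_def inverts_mat_def using VW WV Wi_car
    by (auto simp: Vm_def intro!: exI[of _ Wi])
  have P1: "\<forall>i \<le> M. \<forall>j \<le> M. minv (vdm Mm Mp) $$ (i, j)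
          = (\<Sum>n = 0..M - i. (of_int Mm) ^ n * of_nat ((n + i) choose n)
                               * minv (vdm 0 (Mm + Mp)) $$ (i + n, j))"
  proof (intro allI impI)
    fix i j assume i: "i \<le> M" and j: "j \<le> M"
    have "minv (vdm Mm Mp) $$ (i, j) = (\<Sum>p<Suc M. Sm a M $$ (i,p) * W0 M $$ (p,j))"
      unfolding minvV Wi_def using i j by (intro mult_entry[of _ "Suc M" "Suc M" _ "Suc M"]) auto
    also have "\<dots> = (\<Sum>p<Suc M. of_int a ^ (p - i) * of_nat (p choose i) * W0 M $$ (p,j))"
      using i by (intro sum.cong refl) (auto simp: Sm_def)
    also have "\<dots> = (\<Sum>p=i..M. of_int a ^ (p - i) * of_nat (p choose i) * W0 M $$ (p,j))"
      using i by (intro sum.mono_neutral_right) auto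
    also have "\<dots> = (\<Sum>n = 0..M - i. (of_int Mm) ^ n * of_nat ((n + i) choose n) * W0 M $$ (i + n, j))"
      using i binomial_symmetric[of i] by (intro sum.reindex_bij_witness[of _ "\<lambda>n. i + n" "\<lambda>p. p - i"])
        (auto simp: a_def add.commute)
    finally show "minv (vdm Mm Mp) $$ (i, j)
          = (\<Sum>n = 0..M - i. (of_int Mm) ^ n * of_nat ((n + i) choose n)
                               * minv (vdm 0 (Mm + Mp)) $$ (i + n, j))" by (simp add: minvV0)
  qed
  have P2: "\<forall>i \<le> M. \<forall>j \<le> M. minv (vdm 0 (Mm + Mp)) $$ (i, j)
          = (-1) ^ (i + j) * (\<Sum>k = 0..M. (1 / fact k) * of_nat (k choose j) * of_nat (stirling k i))"
    by (auto simp: minvV0 W0_def)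
  have nu_eq: "nu Mm Mp m k = (\<Sum>t<Suc M. Wi $$ (m, t) * (real t - of_int a) ^ k)" for m k
    unfolding nu_def minvV using assms
    by (subst int_reindex) (auto simp: M_def a_def intro!: sum.cong)
  have P3: "\<forall>m \<le> M. \<forall>k \<le> M. nu Mm Mp m k = (if m = k then 1 else 0)"
  proof (intro allI impI)
    fix m k assume m: "m \<le> M" and k: "k \<le> M"
    have "nu Mm Mp m k = (\<Sum>t<Suc M. Wi $$ (m, t) * Vm a M $$ (t, k))"
      unfolding nu_eq using k by (intro sum.cong refl) (auto simp: Vm_def)
    also have "\<dots> = (Wi * Vm a M) $$ (m, k)"
      using m k by (intro mult_entry[symmetric, OF Wi_car Vm_car]) auto
    also have "\<dots> = (if m = k then 1 else 0)" using m k WV by simp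
    finally show "nu Mm Mp m k = (if m = k then 1 else 0)" .
  qed
  have P4: "\<forall>k :: nat. \<forall>l \<in> {-Mm..Mp}. (\<Sum>m = 0..M. nu Mm Mp m k * of_int l ^ m) = of_int l ^ k"
  proof (intro allI ballI)
    fix k :: nat and l assume l: "l \<in> {-Mm..Mp}"
    define r where "r = nat (l + a)"
    have r: "r < Suc M" and lr: "real_of_int l = real r - of_int a"
      using l by (auto simp: r_def a_def M_def)
    have "(\<Sum>m = 0..M. nu Mm Mp m k * of_int l ^ m)
        = (\<Sum>m<Suc M. \<Sum>t<Suc M. (real t - of_int a) ^ k * (Vm a M $$ (r, m) * Wi $$ (m, t)))"
      unfolding nu_eq atLeast0AtMost lessThan_Suc_atMost using r lr
      by (intro sum.cong refl) (auto simp: sum_distrib_left Vm_def mult_ac intro!: sum.cong)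
    also have "\<dots> = (\<Sum>t<Suc M. (real t - of_int a) ^ k * (\<Sum>m<Suc M. Vm a M $$ (r, m) * Wi $$ (m, t)))"
      by (subst sum.swap) (simp only: sum_distrib_left)
    also have "\<dots> = (\<Sum>t<Suc M. (real t - of_int a) ^ k * (if r = t then 1 else 0))"
    proof (intro sum.cong refl)
      fix t assume t: "t \<in> {..<Suc M}"
      have "(\<Sum>m<Suc M. Vm a M $$ (r, m) * Wi $$ (m, t)) = (Vm a M * Wi) $$ (r, t)"
        using r t by (intro mult_entry[symmetric, OF Vm_car Wi_car]) auto
      also have "\<dots> = (if r = t then 1 else 0)" using r t VW by simp
      finally show "(real t - of_int a) ^ k * (\<Sum>m<Suc M. Vm a M $$ (r, m) * Wi $$ (m, t))
         = (real t - of_int a) ^ k * (if r = t then 1 else 0)" by simp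
    qed
    also have "\<dots> = (\<Sum>t\<in>{..<Suc M}. if r = t then (real t - of_int a) ^ k else 0)"
      by (intro sum.cong refl) simp
    also have "\<dots> = (real r - of_int a) ^ k" using r by (subst sum.delta') auto
    finally show "(\<Sum>m = 0..M. nu Mm Mp m k * of_int l ^ m) = of_int l ^ k" by (simp add: lr)
  qed
  show ?thesis using P0 P1 P2 P3 P4 by blast
qed

end
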